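(* Let $N\ge1$, $K>0$, $r_1,\dots,r_N$ real numbers, $(\mu_{ij})_{1\le i,j\le N}$ a real matrix and $\Psi_1,\dots,\Psi_N:\mathbb{R}^N\to\mathbb{R}$. Assume: (H1) $r_i>0$ for all $i$; $(\mu_{ij})$ is nonnegative, symmetric and irreducible; each $\Psi_i$ is locally Lipschitz on $\mathbb{R}^N$, $\Psi_i(0)=0$, and $\Psi_i$ is monotone increasing with respect to the componentwise order of $\mathbb{R}^N$; (H2) for each $i$ there exist positive constants $R_i,k_i,c_i$ such that $c_i\left(\sum_{j=1}^N v_j\right)^{k_i}\le\Psi_i(v)$ for all $v\in[0,\infty)^N$ with $\sum_{j=1}^N|v_j|\ge R_i$; (H3) for all $i$, $\sum_{j=1}^N\mu_{ij}\le \frac{r_i}{2}$. Then there exists a positive stationary solution $\bar v$ (i.e. $\bar v_i>0$ for all $i$) of the system $$\frac{dv_i}{dt}=v_i\left[r_i-\frac{1}{K}\Psi_i(v)\right]+\sum_{j=1}^N\mu_{ij}(v_j-v_i),\qquad i=1,\dots,N.$$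
   Context: A stationary solution is a vector at which the right-hand side of the system vanishes for every $i$. *)

theory Defs
  imports "HOL-Analysis.Analysis"
begin

definition irreducible_matrix :: "real ^ 'n ^ 'n \<Rightarrow> bool" where
  "irreducible_matrix M \<longleftrightarrow>
     \<not> (\<exists>I :: 'n set. I \<noteq> {} \<and> I \<noteq> UNIV \<and> (\<forall>i\<in>I. \<forall>j. j \<notin> I \<longrightarrow> M $ i $ j = 0))"

definition locally_lipschitz :: "(real ^ 'n \<Rightarrow> real) \<Rightarrow> bool" where
  "locally_lipschitz f \<longleftrightarrow>
     (\<forall>x. \<exists>e>0. \<exists>L. \<forall>y\<in>ball x e. \<forall>z\<in>ball x e. \<bar>f y - f z\<bar> \<le> L * dist y z)"

definition componentwise_mono :: "(real ^ 'n \<Rightarrow> real) \<Rightarrow> bool" where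
  "componentwise_mono f \<longleftrightarrow> (\<forall>x y. (\<forall>j. x $ j \<le> y $ j) \<longrightarrow> f x \<le> f y)"

definition rhs :: "real \<Rightarrow> real ^ 'n \<Rightarrow> real ^ 'n ^ 'n \<Rightarrow> ('n \<Rightarrow> real ^ 'n \<Rightarrow> real)
                   \<Rightarrow> real ^ 'n \<Rightarrow> 'n \<Rightarrow> real" where
  "rhs K r mu Psi v i = v $ i * (r $ i - (1 / K) * Psi i v) + (\<Sum>j\<in>UNIV. mu $ i $ j * (v $ j - v $ i))"

definition stationary :: "real \<Rightarrow> real ^ 'n \<Rightarrow> real ^ 'n ^ 'n \<Rightarrow> ('n \<Rightarrow> real ^ 'n \<Rightarrow> real)
                   \<Rightarrow> real ^ 'n \<Rightarrow> bool" where
  "stationary K r mu Psi v \<longleftrightarrow> (\<forall>i. rhs K r mu Psi v i = 0)"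

end

theory Submission imports Defs begin

lemma lip_cont:
  fixes f :: "real ^ 'n \<Rightarrow> real"
  assumes "locally_lipschitz f"
  shows "continuous_on UNIV f"
proof -
  have "isCont f x" for x
  proof -
    obtain e L where e: "e > 0" and L: "\<forall>y\<in>ball x e. \<forall>z\<in>ball x e. \<bar>f y - f z\<bar> \<le> L * dist y z"
      using assms unfolding locally_lipschitz_def by blast
    show ?thesis unfolding continuous_at_eps_delta
    proof (intro allI impI)
      fix eps :: real assume eps: "eps > 0"
      define d where "d = min e (eps / (\<bar>L\<bar> + 1))"
      have d: "d > 0" using e eps by (simp add: d_def)
      have "dist (f y) (f x) < eps" if y: "dist y x < d" for y
      proof -
        have "y \<in> ball x e" using y by (simp add: d_def dist_commute)
        then have "\<bar>f y - f x\<bar> \<le> L * dist y x" using L e by simp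
        also have "\<dots> \<le> \<bar>L\<bar> * dist y x" by (simp add: mult_right_mono)
        also have "\<dots> \<le> \<bar>L\<bar> * (eps / (\<bar>L\<bar> + 1))"
          using y by (intro mult_left_mono) (auto simp: d_def)
        also have "\<dots> < eps" using eps by (simp add: field_simps)
        finally show ?thesis by (simp add: dist_real_def)
      qed
      then show "\<exists>d>0. \<forall>y. dist y x < d \<longrightarrow> dist (f y) (f x) < eps" using d by blast
    qed
  qed
  then show ?thesis by (simp add: continuous_at_imp_continuous_on)
qed

lemma sum_mu_zero:
  fixes mu :: "real ^ 'n ^ 'n" and v :: "real ^ 'n"
  assumes mu_sym: "\<forall>i j. mu $ i $ j = mu $ j $ i"
  shows "(\<Sum>i\<in>UNIV. \<Sum>j\<in>UNIV. mu $ i $ j * (v $ j - v $ i)) = 0"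
proof -
  have "(\<Sum>i\<in>UNIV. \<Sum>j\<in>UNIV. mu $ i $ j * (v $ j - v $ i)) =
     (\<Sum>i\<in>UNIV. \<Sum>j\<in>UNIV. mu $ i $ j * v $ j) - (\<Sum>i\<in>UNIV. \<Sum>j\<in>UNIV. mu $ i $ j * v $ i)"
    by (simp add: right_diff_distrib sum_subtractf)
  also have "(\<Sum>i\<in>UNIV. \<Sum>j\<in>UNIV. mu $ i $ j * v $ j) = (\<Sum>j\<in>UNIV. \<Sum>i\<in>UNIV. mu $ i $ j * v $ j)"
    by (rule sum.swap)
  also have "\<dots> = (\<Sum>j\<in>UNIV. \<Sum>i\<in>UNIV. mu $ j $ i * v $ j)" using mu_sym by simp
  finally show ?thesis by simp
qed

lemma sum_rhs:
  assumes mu_sym: "\<forall>i j. mu $ i $ j = mu $ j $ i"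
  shows "(\<Sum>i\<in>UNIV. rhs K r mu Psi v i) = (\<Sum>i\<in>UNIV. v $ i * (r $ i - (1 / K) * Psi i v))"
  unfolding rhs_def using sum_mu_zero[OF mu_sym, of v] by (simp add: sum.distrib)

lemma cont_rhs:
  assumes "\<forall>i. locally_lipschitz (Psi i)"
  shows "continuous_on UNIV (\<lambda>v. \<chi> i. rhs K r mu Psi v i)"
proof -
  have c: "continuous_on UNIV (Psi i)" for i using lip_cont assms by blast
  show ?thesis unfolding rhs_def
    by (intro continuous_intros c)
qed

theorem theorem1p3:
  fixes K :: real and r :: "real ^ 'n" and mu :: "real ^ 'n ^ 'n"
    and Psi :: "'n \<Rightarrow> real ^ 'n \<Rightarrow> real"
  assumes K_pos: "K > 0"
    and r_pos: "\<forall>i. r $ i > 0"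
    and mu_nonneg: "\<forall>i j. mu $ i $ j \<ge> 0"
    and mu_sym: "\<forall>i j. mu $ i $ j = mu $ j $ i"
    and mu_irred: "irreducible_matrix mu"
    and Psi_lip: "\<forall>i. locally_lipschitz (Psi i)"
    and Psi_zero: "\<forall>i. Psi i 0 = 0"
    and Psi_mono: "\<forall>i. componentwise_mono (Psi i)"
    and H2: "\<forall>i. \<exists>R k c. R > 0 \<and> k > 0 \<and> c > 0 \<and>
               (\<forall>v. (\<forall>j. v $ j \<ge> 0) \<and> (\<Sum>j\<in>UNIV. \<bar>v $ j\<bar>) \<ge> R
                    \<longrightarrow> c * (\<Sum>j\<in>UNIV. v $ j) powr k \<le> Psi i v)"
    and H3: "\<forall>i. (\<Sum>j\<in>UNIV. mu $ i $ j) \<le> r $ i / 2"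
  shows "\<exists>v. (\<forall>i. v $ i > 0) \<and> stationary K r mu Psi v"
proof -
  have "\<forall>i. \<exists>e L. e > 0 \<and> (\<forall>y\<in>ball 0 e. \<forall>z\<in>ball 0 e. \<bar>Psi i y - Psi i z\<bar> \<le> L * dist y z)"
    using Psi_lip unfolding locally_lipschitz_def by blast
  then have "\<exists>e. \<forall>i. \<exists>L. e i > 0 \<and> (\<forall>y\<in>ball 0 (e i). \<forall>z\<in>ball 0 (e i). \<bar>Psi i y - Psi i z\<bar> \<le> L * dist y z)"
    by (rule choice)
  then obtain e where "\<forall>i. \<exists>L. e i > 0 \<and> (\<forall>y\<in>ball 0 (e i). \<forall>z\<in>ball 0 (e i). \<bar>Psi i y - Psi i z\<bar> \<le> L * dist y z)"
    by blast
  then have "\<exists>L. \<forall>i. e i > 0 \<and> (\<forall>y\<in>ball 0 (e i). \<forall>z\<in>ball 0 (e i). \<bar>Psi i y - Psi i z\<bar> \<le> L i * dist y z)"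
    by (rule choice)
  then obtain L where eL0: "\<forall>i. e i > 0 \<and> (\<forall>y\<in>ball 0 (e i). \<forall>z\<in>ball 0 (e i). \<bar>Psi i y - Psi i z\<bar> \<le> L i * dist y z)"
    by blast
  have eL: "\<And>i. e i > 0"
    "\<And>i. \<forall>y\<in>ball 0 (e i). \<forall>z\<in>ball 0 (e i). \<bar>Psi i y - Psi i z\<bar> \<le> L i * dist y z"
    using eL0 by auto
  define g where "g i = min (e i / 2) (K * r $ i / (2 * (\<bar>L i\<bar> + 1)))" for i
  define s where "s = Min (range g)"
  have gpos: "g i > 0" for i using eL(1)[of i] K_pos r_pos by (simp add: g_def)
  have s_pos: "s > 0" unfolding s_def using gpos by (simp add: Min_gr_iff)
  have s_le: "s \<le> g i" for i unfolding s_def by simp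
  have small: "Psi i v < K * r $ i" if "norm v \<le> s" for i v
  proof -
    have nv: "norm v \<le> e i / 2" "norm v \<le> K * r $ i / (2 * (\<bar>L i\<bar> + 1))"
      using that s_le[of i] by (auto simp: g_def)
    have "v \<in> ball 0 (e i)" using nv eL(1)[of i] by simp
    moreover have "(0::real^'n) \<in> ball 0 (e i)" using eL(1)[of i] by simp
    ultimately have "\<bar>Psi i v - Psi i 0\<bar> \<le> L i * dist v 0" using eL(2)[of i] by blast
    then have "Psi i v \<le> L i * norm v" using Psi_zero by (simp add: abs_le_iff)
    also have "\<dots> \<le> \<bar>L i\<bar> * norm v" by (intro mult_right_mono) auto
    also have "\<dots> \<le> \<bar>L i\<bar> * (K * r $ i / (2 * (\<bar>L i\<bar> + 1)))"
      using nv(2) by (intro mult_left_mono) auto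
    also have "\<dots> < K * r $ i" using K_pos r_pos[rule_format, of i]
      by (simp add: field_simps) (intro add_nonneg_pos mult_nonneg_nonneg mult_pos_pos; simp)
    finally show ?thesis .
  qed
  define Q where "Q i R k c \<longleftrightarrow> R > 0 \<and> k > 0 \<and> c > 0 \<and>
               (\<forall>v. (\<forall>j. v $ j \<ge> 0) \<and> (\<Sum>j\<in>UNIV. \<bar>v $ j\<bar>) \<ge> R
                    \<longrightarrow> c * (\<Sum>j\<in>UNIV. v $ j) powr k \<le> Psi i v)" for i R k c
  have "\<forall>i. \<exists>R k c. Q i R k c" using H2 unfolding Q_def by blast
  then have "\<exists>R. \<forall>i. \<exists>k c. Q i (R i) k c" by (rule choice)
  then obtain R where "\<forall>i. \<exists>k c. Q i (R i) k c" by blast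
  then have "\<exists>k. \<forall>i. \<exists>c. Q i (R i) (k i) c" by (rule choice)
  then obtain k where "\<forall>i. \<exists>c. Q i (R i) (k i) c" by blast
  then have "\<exists>c. \<forall>i. Q i (R i) (k i) (c i)" by (rule choice)
  then obtain c where Q: "\<forall>i. Q i (R i) (k i) (c i)" by blast
  have Rkc: "\<And>i. R i > 0" "\<And>i. k i > 0" "\<And>i. c i > 0"
    "\<And>i v. (\<forall>j. v $ j \<ge> 0) \<Longrightarrow> (\<Sum>j\<in>UNIV. \<bar>v $ j\<bar>) \<ge> R i
                    \<Longrightarrow> c i * (\<Sum>j\<in>UNIV. v $ j) powr k i \<le> Psi i v"
    using Q unfolding Q_def by auto
  define h where "h i = max (R i) (max (2 * s) ((K * r $ i / c i + 1) powr (1 / k i)))" for i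
  define S where "S = Max (range h)"
  have S_ge: "h i \<le> S" for i unfolding S_def by simp
  have sS: "s < S" using S_ge[of undefined] s_pos by (simp add: h_def)
  have big: "Psi i v > K * r $ i" if v: "\<forall>j. v $ j \<ge> 0" "(\<Sum>j\<in>UNIV. v $ j) = S" for i v
  proof -
    have "(\<Sum>j\<in>UNIV. \<bar>v $ j\<bar>) = S" using v by simp
    then have "c i * S powr k i \<le> Psi i v" using Rkc(4)[of v i] v S_ge[of i]
      by (simp add: h_def)
    moreover
    define X where "X = K * r $ i / c i + 1"
    have "K * r $ i / c i > 0" using K_pos r_pos Rkc(3)[of i] by simp
    then have Xpos: "X > 0" by (simp add: X_def)
    have "X powr (1 / k i) \<le> S" using S_ge[of i] by (simp add: h_def X_def)
    then have "(X powr (1 / k i)) powr k i \<le> S powr k i"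
      using Rkc(2)[of i] by (intro powr_mono2) auto
    then have "X \<le> S powr k i" using Rkc(2)[of i] Xpos by (simp add: powr_powr)
    then have "c i * X \<le> c i * S powr k i" using Rkc(3)[of i] by simp
    moreover have "c i * X = K * r $ i + c i" using Rkc(3)[of i] by (simp add: X_def field_simps)
    ultimately show ?thesis using Rkc(3)[of i] by linarith
  qed
  define D where "D = {v :: real ^ 'n. (\<forall>j. 0 \<le> v $ j) \<and> s \<le> (\<Sum>j\<in>UNIV. v $ j) \<and> (\<Sum>j\<in>UNIV. v $ j) \<le> S}"
  define F where "F v = (\<chi> i. rhs K r mu Psi v i)" for v
  have contF: "continuous_on UNIV F" unfolding F_def using cont_rhs[OF Psi_lip] .
  have closedD: "closed D" unfolding D_def
    by (intro closed_Collect_conj closed_Collect_all closed_Collect_le continuous_intros)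
  have boundedD: "bounded D"
  proof -
    have "norm v \<le> S" if "v \<in> D" for v
      using norm_le_l1_cart[of v] that by (simp add: D_def)
    then show ?thesis by (auto simp: bounded_iff)
  qed
  have convexD: "convex D"
    unfolding convex_def D_def
  proof (intro ballI allI impI, safe)
    fix x y :: "real ^ 'n" and u v :: real and j
    assume a: "0 \<le> u" "0 \<le> v" "u + v = 1" "\<forall>j. 0 \<le> x $ j" "s \<le> sum (($) x) UNIV" "sum (($) x) UNIV \<le> S"
      "\<forall>j. 0 \<le> y $ j" "s \<le> sum (($) y) UNIV" "sum (($) y) UNIV \<le> S"
    have e: "sum (($) (u *\<^sub>R x + v *\<^sub>R y)) UNIV = u * sum (($) x) UNIV + v * sum (($) y) UNIV"
      by (simp add: sum.distrib sum_distrib_left)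
    show "0 \<le> (u *\<^sub>R x + v *\<^sub>R y) $ j" using a by simp
    have us: "u * s + v * s = s" "u * S + v * S = S"
      by (metis a(3) distrib_right mult_1)+
    have "u * s \<le> u * sum (($) x) UNIV" "v * s \<le> v * sum (($) y) UNIV"
      using a by (auto intro: mult_left_mono)
    then show "s \<le> sum (($) (u *\<^sub>R x + v *\<^sub>R y)) UNIV" unfolding e using a us
      by linarith
    have "u * sum (($) x) UNIV \<le> u * S" "v * sum (($) y) UNIV \<le> v * S"
      using a by (auto intro: mult_left_mono)
    then show "sum (($) (u *\<^sub>R x + v *\<^sub>R y)) UNIV \<le> S" unfolding e using a us
      by linarith
  qed
  have v0: "(\<chi> j. s / real CARD('n)) \<in> D"
    using s_pos sS by (simp add: D_def)
  then have neD: "D \<noteq> {}" by blast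
  define f where "f v = closest_point D (v + F v)" for v
  have "\<exists>v\<in>D. f v = v"
  proof (rule brouwer)
    show "compact D" using closedD boundedD by (simp add: compact_eq_bounded_closed)
    show "convex D" "D \<noteq> {}" by fact+
    show "continuous_on D f" unfolding f_def
      by (intro continuous_on_compose2[OF continuous_on_closest_point[OF convexD closedD neD]]
          continuous_intros continuous_on_subset[OF contF]) auto
    show "f \<in> D \<rightarrow> D" unfolding f_def using closest_point_in_set[OF closedD neD] by blast
  qed blast
  then obtain v where vD: "v \<in> D" and fv: "f v = v" by blast
  define G where "G i = rhs K r mu Psi v i" for i
  have vi: "(\<Sum>l\<in>UNIV. G l * (y $ l - v $ l)) \<le> 0" if "y \<in> D" for y
  proof -
    have "inner ((v + F v) - v) (y - v) \<le> 0"
      using closest_point_dot[OF convexD closedD that, of "v + F v"] fv by (simp add: f_def)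
    then show ?thesis by (simp add: inner_vec_def F_def G_def)
  qed
  have vnn: "\<forall>j. 0 \<le> v $ j" and vs: "s \<le> sum (($) v) UNIV" and vS: "sum (($) v) UNIV \<le> S"
    using vD by (auto simp: D_def)
  define E where "E j (a::real) = v + (\<chi> l. if l = j then a else 0)" for j a
  have Esum: "sum (($) (E j a)) UNIV = sum (($) v) UNIV + a" for j a
    by (simp add: E_def sum.distrib)
  have Evi: "(\<Sum>l\<in>UNIV. G l * (E j a $ l - v $ l)) = a * G j" for j a
  proof -
    have "(\<Sum>l\<in>UNIV. G l * (E j a $ l - v $ l)) = (\<Sum>l\<in>UNIV. if l = j then G l * a else 0)"
      by (rule sum.cong) (auto simp: E_def)
    then show ?thesis by simp
  qed
  have caseA: "G j \<le> 0" if "sum (($) v) UNIV < S" for j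
  proof -
    define a where "a = S - sum (($) v) UNIV"
    have a: "a > 0" using that by (simp add: a_def)
    have "E j a \<in> D" using vnn vs a Esum[of j a] by (auto simp: D_def E_def a_def)
    then have "a * G j \<le> 0" using vi[of "E j a"] Evi[of j a] by simp
    then show ?thesis using a by (simp add: mult_le_0_iff)
  qed
  have caseB: "G i \<ge> 0" if "sum (($) v) UNIV > s" "v $ i > 0" for i
  proof -
    define a where "a = min (v $ i) (sum (($) v) UNIV - s)"
    have a: "a > 0" using that by (simp add: a_def)
    have "E i (- a) \<in> D" using vnn vS a Esum[of i "-a"] that
      by (auto simp: D_def E_def a_def)
    then have "(- a) * G i \<le> 0" using vi[of "E i (-a)"] Evi[of i "-a"] by simp
    then show ?thesis using a by (simp add: zero_le_mult_iff)
  qed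
  have P1: "G i \<ge> 0" if "v $ i = 0" for i
    using that mu_nonneg vnn by (auto simp: G_def rhs_def intro!: sum_nonneg)
  have caseC: "G i \<ge> 0" if "sum (($) v) UNIV > s" for i
  proof (cases "v $ i = 0")
    case True
    then show ?thesis by (rule P1)
  next
    case False
    then have "v $ i > 0" using vnn by (simp add: less_le)
    then show ?thesis using caseB that by blast
  qed
  have sumG: "(\<Sum>i\<in>UNIV. G i) = (\<Sum>i\<in>UNIV. v $ i * (r $ i - (1 / K) * Psi i v))"
    unfolding G_def by (rule sum_rhs[OF mu_sym])
  have vne: "\<exists>i. v $ i \<noteq> 0"
  proof (rule ccontr)
    assume "\<not> ?thesis"
    then have "sum (($) v) UNIV = 0" by simp
    then show False using vs s_pos by simp
  qed
  have Gz: "G i = 0" for i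
  proof (cases "sum (($) v) UNIV = S")
    case True
    have Gnn: "G i \<ge> 0" for i using caseC sS True by simp
    have neg: "v $ i * (r $ i - (1 / K) * Psi i v) \<le> 0" for i
    proof -
      have "Psi i v > K * r $ i" using big vnn True by blast
      then have "r $ i - (1 / K) * Psi i v < 0" using K_pos by (simp add: field_simps)
      then show ?thesis using vnn by (simp add: mult_nonneg_nonpos)
    qed
    have "(\<Sum>i\<in>UNIV. G i) \<ge> 0" using Gnn by (simp add: sum_nonneg)
    then have "(\<Sum>i\<in>UNIV. - (v $ i * (r $ i - (1 / K) * Psi i v))) = 0"
      using sumG neg by (simp add: sum_negf sum_nonpos antisym)
    then have z: "\<forall>i. - (v $ i * (r $ i - (1 / K) * Psi i v)) = 0"
      using neg by (subst (asm) sum_nonneg_eq_0_iff) auto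
    have n: "r $ i - (1 / K) * Psi i v < 0" for i
      using big[OF vnn True, of i] K_pos by (simp add: field_simps)
    have "\<forall>i. v $ i = 0"
    proof
      fix i show "v $ i = 0" using z[rule_format, of i] n[of i] by auto
    qed
    then show ?thesis using vne by blast
  next
    case False
    then have lt: "sum (($) v) UNIV < S" using vS by simp
    show ?thesis
    proof (cases "sum (($) v) UNIV = s")
      case True
      have Gnp: "G i \<le> 0" for i using caseA lt by blast
      have pos: "v $ i * (r $ i - (1 / K) * Psi i v) \<ge> 0" for i
      proof -
        have "norm v \<le> s" using norm_le_l1_cart[of v] vnn True by simp
        then have "Psi i v < K * r $ i" by (rule small)
        then have "r $ i - (1 / K) * Psi i v > 0" using K_pos by (simp add: field_simps)
        then show ?thesis using vnn by simp
      qed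
      have "(\<Sum>i\<in>UNIV. G i) \<le> 0" using Gnp by (simp add: sum_nonpos)
      then have "(\<Sum>i\<in>UNIV. (v $ i * (r $ i - (1 / K) * Psi i v))) = 0"
        using sumG pos by (simp add: sum_nonneg antisym)
      then have z: "\<forall>i. (v $ i * (r $ i - (1 / K) * Psi i v)) = 0"
        using pos by (subst (asm) sum_nonneg_eq_0_iff) auto
      have n: "r $ i - (1 / K) * Psi i v > 0" for i
      proof -
        have "norm v \<le> s" using norm_le_l1_cart[of v] vnn True by simp
        then have "Psi i v < K * r $ i" by (rule small)
        then show ?thesis using K_pos by (simp add: field_simps)
      qed
      have "\<forall>i. v $ i = 0"
      proof
        fix i show "v $ i = 0" using z[rule_format, of i] n[of i] by auto
      qed
      then show ?thesis using vne by blast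
    next
      case False
      then have gt: "sum (($) v) UNIV > s" using vs by simp
      show ?thesis using caseA[OF lt, of i] caseC[OF gt, of i] by simp
    qed
  qed
  have stat: "stationary K r mu Psi v" using Gz by (simp add: stationary_def G_def)
  have vpos: "\<forall>i. v $ i > 0"
  proof (rule ccontr)
    assume nt: "\<not> (\<forall>i. v $ i > 0)"
    define Z where "Z = {i. v $ i = 0}"
    have "Z \<noteq> {}" using nt vnn by (auto simp: Z_def less_eq_real_def)
    moreover have "Z \<noteq> UNIV" using vne by (auto simp: Z_def)
    moreover have "\<forall>i\<in>Z. \<forall>j. j \<notin> Z \<longrightarrow> mu $ i $ j = 0"
    proof (intro ballI allI impI)
      fix i j assume i: "i \<in> Z" and j: "j \<notin> Z"
      have "G i = (\<Sum>l\<in>UNIV. mu $ i $ l * v $ l)" using i by (simp add: G_def rhs_def Z_def)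
      then have "(\<Sum>l\<in>UNIV. mu $ i $ l * v $ l) = 0" using Gz by simp
      then have "\<forall>l. mu $ i $ l * v $ l = 0"
        using mu_nonneg vnn by (subst (asm) sum_nonneg_eq_0_iff) auto
      then show "mu $ i $ j = 0" using j by (auto simp: Z_def)
    qed
    ultimately show False using mu_irred unfolding irreducible_matrix_def by blast
  qed
  show ?thesis using vpos stat by blast
qed

end
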